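(* Let $\mathbf{J}\in\mathbb{R}^{n\times n}$ be a real symmetric matrix with zero diagonal, and let $\alpha,\beta>0$ be such that $\mu:=\lambda_{\min}(\mathbf{J}+\alpha\mathbf{I})>0$. Let $\{\boldsymbol{x}^{(k)}\}_{k\ge0}$ be the DOCH iterates starting from an arbitrary $\boldsymbol{x}^{(0)}\in\mathbb{R}^n$. Then the sequence $\{\boldsymbol{x}^{(k)}\}$ is bounded, and $\lim_{k\to\infty}\|\boldsymbol{x}^{(k+1)}-\boldsymbol{x}^{(k)}\|_2=0$.
   Context: Let $f(\boldsymbol{x})=\frac{\beta}{4}\sum_i x_i^4$, $g(\boldsymbol{x})=\frac12\boldsymbol{x}^\top(\mathbf{J}+\alpha\mathbf{I})\boldsymbol{x}$ and $\mathcal{H}=f-g$. The DOCH iterates are defined by $\boldsymbol{x}^{(k+1)}$ being the minimizer of $F_k(\boldsymbol{x})=f(\boldsymbol{x})-g(\boldsymbol{x}^{(k)})-\nabla g(\boldsymbol{x}^{(k)})^\top(\boldsymbol{x}-\boldsymbol{x}^{(k)})$; explicitly, $\boldsymbol{x}^{(k+1)}=\varphi(\beta^{-1}(\mathbf{J}+\alpha\mathbf{I})\boldsymbol{x}^{(k)})$ with $\varphi$ the componentwise real cube root. *)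

theory Defs
  imports "HOL-Analysis.Analysis"
begin

(* Smallest eigenvalue of a real square matrix (used for symmetric matrices,
   whose eigenvalues are all real). *)
definition lambda_min :: "real^'n^'n \<Rightarrow> real" where
  "lambda_min A = Min {l. \<exists>v. v \<noteq> 0 \<and> A *v v = l *\<^sub>R v}"

definition doch_step :: "real^'n^'n \<Rightarrow> real \<Rightarrow> real \<Rightarrow> real^'n \<Rightarrow> real^'n" where
  "doch_step J \<alpha> \<beta> x = (\<chi> i. root 3 ((((J + \<alpha> *\<^sub>R mat 1) *v x) $ i) / \<beta>))"

end

theory Submission
  imports Defs
begin

lemma symq:
  fixes A :: "real^'n^'n"
  assumes "transpose A = A"
  shows "x \<bullet> (A *v y) = y \<bullet> (A *v x)"
proof -
  have "x \<bullet> (A *v y) = (x v* A) \<bullet> y" by (simp add: dot_lmul_matrix)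
  also have "x v* A = transpose A *v x" by simp
  also have "\<dots> = A *v x" using assms by simp
  finally show ?thesis by (simp add: inner_commute)
qed

lemma eig_finite:
  fixes A :: "real^'n^'n"
  assumes "transpose A = A"
  shows "finite {l. \<exists>v. v \<noteq> 0 \<and> A *v v = l *\<^sub>R v}" (is "finite ?S")
proof -
  define e where "e l = (SOME v. v \<noteq> 0 \<and> A *v v = l *\<^sub>R v)" for l
  have e: "e l \<noteq> 0 \<and> A *v e l = l *\<^sub>R e l" if "l \<in> ?S" for l
    using that unfolding e_def by (metis (mono_tags, lifting) mem_Collect_eq someI_ex)
  have inj: "inj_on e ?S"
  proof (rule inj_onI)
    fix a b assume a: "a \<in> ?S" and b: "b \<in> ?S" and eq: "e a = e b"
    have "a *\<^sub>R e a = b *\<^sub>R e a" using e[OF a] e[OF b] eq by metis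
    then show "a = b" using e[OF a] by simp
  qed
  have orth0: "e a \<bullet> e b = 0" if a: "a \<in> ?S" and b: "b \<in> ?S" and ne: "e a \<noteq> e b" for a b
  proof -
    have "a \<noteq> b" using ne by auto
    have "a * (e a \<bullet> e b) = (A *v e a) \<bullet> e b" using e[OF a] by simp
    also have "\<dots> = e b \<bullet> (A *v e a)" by (simp add: inner_commute)
    also have "\<dots> = e a \<bullet> (A *v e b)" using symq[OF assms] by metis
    also have "\<dots> = b * (e a \<bullet> e b)" using e[OF b] by simp
    finally have "(a - b) * (e a \<bullet> e b) = 0" by (simp add: algebra_simps)
    then show "e a \<bullet> e b = 0" using \<open>a \<noteq> b\<close> by simp
  qed
  have orth: "pairwise orthogonal (e ` ?S)"
    using orth0 by (auto simp: pairwise_def orthogonal_def)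
  have "0 \<notin> e ` ?S" using e by force
  then have "independent (e ` ?S)" using orth pairwise_orthogonal_independent by blast
  then have "finite (e ` ?S)" using independent_bound by blast
  then show ?thesis using inj finite_imageD by blast
qed

lemma pd:
  fixes A :: "real^'n^'n"
  assumes sym: "transpose A = A" and pos: "lambda_min A > 0"
  shows "\<exists>m>0. \<forall>u. m * (norm u)^2 \<le> u \<bullet> (A *v u)"
proof -
  let ?q = "\<lambda>u. u \<bullet> (A *v u)"
  have cont: "continuous_on (sphere 0 1) ?q"
    by (intro continuous_intros linear_continuous_on bounded_linear_compose[OF matrix_vector_mul_bounded_linear] bounded_linear_ident)
  have ne: "sphere (0::real^'n) 1 \<noteq> {}"
  proof -
    obtain i :: 'n where True by simp
    have "axis i (1::real) \<in> sphere 0 1" by simp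
    then show ?thesis by blast
  qed
  obtain v where v: "v \<in> sphere 0 1" and vmin: "\<And>y. y \<in> sphere 0 1 \<Longrightarrow> ?q v \<le> ?q y"
    using continuous_attains_inf[OF compact_sphere ne cont] by blast
  define m where "m = ?q v"
  have nv: "norm v = 1" using v by simp
  have vv: "v \<bullet> v = 1" using nv by (metis norm_eq_sqrt_inner real_sqrt_eq_1_iff)
  have Q: "m * (norm u)^2 \<le> ?q u" for u
  proof (cases "u = 0")
    case True then show ?thesis by simp
  next
    case False
    let ?w = "(1 / norm u) *\<^sub>R u"
    have "?w \<in> sphere 0 1" using False by simp
    then have "m \<le> ?q ?w" using vmin m_def by blast
    also have "?q ?w = ?q u / (norm u)^2"
      by (simp add: matrix_vector_mult_scaleR power2_eq_square)
    finally show ?thesis using False by (simp add: field_simps)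
  qed
  define w where "w = A *v v - m *\<^sub>R v"
  have hw: "w \<bullet> (A *v v) = w \<bullet> w + m * (v \<bullet> w)"
    by (simp add: w_def inner_diff_right inner_diff_left inner_commute right_diff_distrib)
  have key: "0 \<le> 2 * t * (w \<bullet> w) + t^2 * (?q w - m * (norm w)^2)" for t
  proof -
    have e0: "0 \<le> ?q (v + t *\<^sub>R w) - m * (norm (v + t *\<^sub>R w))^2" using Q[of "v + t *\<^sub>R w"] by simp
    have e2: "?q (v + t *\<^sub>R w) = ?q v + t * (v \<bullet> (A *v w)) + t * (w \<bullet> (A *v v)) + t^2 * ?q w"
      by (simp add: algebra_simps inner_add_left inner_add_right power2_eq_square)
    have e3: "v \<bullet> (A *v w) = w \<bullet> (A *v v)" using symq[OF sym] by metis
    have e4: "(norm (v + t *\<^sub>R w))^2 = 1 + 2 * t * (v \<bullet> w) + t^2 * (norm w)^2"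
      using vv by (simp only: power2_norm_eq_inner) (simp add: inner_add_left inner_add_right inner_commute algebra_simps power2_eq_square)
    have "0 \<le> m + 2 * t * (w \<bullet> (A *v v)) + t^2 * ?q w - m * (1 + 2 * t * (v \<bullet> w) + t^2 * (norm w)^2)"
      using e0 unfolding e2 e3 e4 m_def by simp
    then show ?thesis unfolding hw by (simp add: algebra_simps)
  qed
  have "w = 0"
  proof (rule ccontr)
    assume "w \<noteq> 0"
    define s where "s = w \<bullet> w"
    define c where "c = ?q w - m * (norm w)^2"
    have sp: "s > 0" using \<open>w \<noteq> 0\<close> s_def by simp
    define t where "t = - s / (\<bar>c\<bar> + 1)"
    have "0 \<le> 2 * t * s + t^2 * c" using key[of t] s_def c_def by simp
    moreover have "2 * t * s + t^2 * c < 0"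
    proof -
      have d: "\<bar>c\<bar> + 1 > 0" by simp
      have "t^2 * c \<le> t^2 * \<bar>c\<bar>" by (simp add: mult_left_mono)
      also have "t^2 * \<bar>c\<bar> \<le> s^2 / (\<bar>c\<bar> + 1)"
      proof -
        have "t^2 * \<bar>c\<bar> = (s^2 / (\<bar>c\<bar> + 1)) * (\<bar>c\<bar> / (\<bar>c\<bar> + 1))"
          unfolding t_def by (simp add: power2_eq_square)
        also have "\<dots> \<le> (s^2 / (\<bar>c\<bar> + 1)) * 1"
          by (rule mult_left_mono) (use d in auto)
        finally show ?thesis by simp
      qed
      finally have h1: "t^2 * c \<le> s^2 / (\<bar>c\<bar> + 1)" .
      have h2: "2 * t * s = -2 * (s^2 / (\<bar>c\<bar> + 1))" unfolding t_def by (simp add: power2_eq_square)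
      have "2 * t * s + t^2 * c \<le> -(s^2 / (\<bar>c\<bar> + 1))" using h1 h2 by linarith
      also have "\<dots> < 0" using sp d by simp
      finally show ?thesis .
    qed
    ultimately show False by simp
  qed
  then have "A *v v = m *\<^sub>R v" unfolding w_def by simp
  moreover have "v \<noteq> 0" using nv by auto
  ultimately have "m \<in> {l. \<exists>v. v \<noteq> 0 \<and> A *v v = l *\<^sub>R v}" by blast
  then have "lambda_min A \<le> m" unfolding lambda_min_def using eig_finite[OF sym] by simp
  then show ?thesis using Q pos by (intro exI[of _ m]) auto
qed


lemma quart: "(y::real)^4 - x^4 \<le> 4 * y^3 * (y - x)"
proof -
  have "4 * y^3 * (y - x) - (y^4 - x^4) = (y - x)^2 * ((y + x)^2 + 2 * y^2)"
    by (simp add: algebra_simps power2_eq_square power3_eq_cube power4_eq_xxxx)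
  moreover have "(y - x)^2 * ((y + x)^2 + 2 * y^2) \<ge> 0" by simp
  ultimately show ?thesis by linarith
qed

lemma hbound: "(\<beta>::real) > 0 \<Longrightarrow> \<beta>/4 * t^4 - K/2 * t^2 \<ge> - (K^2 / (4*\<beta>))"
proof -
  assume b: "\<beta> > 0"
  have "\<beta>/4 * t^4 - K/2 * t^2 + K^2 / (4*\<beta>) = (\<beta> * t^2 - K)^2 / (4*\<beta>)"
    using b by (simp add: field_simps power2_eq_square power4_eq_xxxx)
  moreover have "(\<beta> * t^2 - K)^2 / (4*\<beta>) \<ge> 0" using b by simp
  ultimately show ?thesis by linarith
qed

lemma tbound:
  assumes b: "(\<beta>::real) > 0" and K: "K \<ge> 0" and h: "\<beta>/4 * t^4 - K/2 * t^2 \<le> M"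
  shows "\<bar>t\<bar> \<le> max 1 (4 * (\<bar>M\<bar> + K) / \<beta>)"
proof (cases "\<bar>t\<bar> \<le> 1")
  case True then show ?thesis by simp
next
  case False
  define s where "s = t^2"
  have st0: "\<bar>t\<bar> * 1 \<le> \<bar>t\<bar> * \<bar>t\<bar>" using False by (intro mult_left_mono) auto
  have st: "\<bar>t\<bar> \<le> s" using st0 unfolding s_def by (simp add: power2_eq_square)
  have s1: "s \<ge> 1" using st False by linarith
  have "\<beta>/4 * s^2 \<le> M + K/2 * s" using h unfolding s_def by (simp add: power4_eq_xxxx power2_eq_square)
  also have "\<dots> \<le> (\<bar>M\<bar> + K) * s" 
  proof -
    have "\<bar>M\<bar> * 1 \<le> \<bar>M\<bar> * s" using s1 by (intro mult_left_mono) auto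
    moreover have "K * s \<ge> 0" using s1 K by simp
    ultimately show ?thesis by (simp add: algebra_simps)
  qed
  finally have "\<beta>/4 * s * s \<le> (\<bar>M\<bar> + K) * s" by (simp add: power2_eq_square)
  then have "\<beta>/4 * s \<le> \<bar>M\<bar> + K" using s1 by (simp add: mult_le_cancel_right)
  then have "s \<le> 4 * (\<bar>M\<bar> + K) / \<beta>" using b by (simp add: field_simps)
  then show ?thesis using st by simp
qed


theorem propositionS7:
  fixes J :: "real^'n^'n" and \<alpha> \<beta> :: real and x :: "nat \<Rightarrow> real^'n"
  assumes symm: "transpose J = J"
    and diag0: "\<forall>i. J $ i $ i = 0"
    and alpha_pos: "\<alpha> > 0" and beta_pos: "\<beta> > 0"
    and mu_pos: "lambda_min (J + \<alpha> *\<^sub>R mat 1) > 0"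
    and iter: "\<forall>k. x (Suc k) = doch_step J \<alpha> \<beta> (x k)"
  shows "bounded (range x) \<and> (\<lambda>k. norm (x (Suc k) - x k)) \<longlonglongrightarrow> 0"
proof -
  define A where "A = J + \<alpha> *\<^sub>R mat 1"
  have Jij: "J $ i $ j = J $ j $ i" for i j
    using symm by (metis transpose_def vec_lambda_beta)
  have symA: "transpose A = A"
    unfolding A_def by (simp add: transpose_def vec_eq_iff mat_def Jij)
  obtain m where mpos: "m > 0" and mq: "\<And>u. m * (norm u)^2 \<le> u \<bullet> (A *v u)"
    using pd[OF symA] mu_pos unfolding A_def by blast
  obtain K where Kpos: "K > 0" and Kb: "\<And>u. norm (A *v u) \<le> norm u * K"
    using bounded_linear.pos_bounded[OF matrix_vector_mul_bounded_linear[of A]] by blast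
  define H where "H y = \<beta>/4 * (\<Sum>i\<in>UNIV. (y$i)^4) - 1/2 * (y \<bullet> (A *v y))" for y :: "real^'n"
  have nsq: "(norm u)^2 = (\<Sum>i\<in>UNIV. (u$i)^2)" for u :: "real^'n"
    by (simp only: power2_norm_eq_inner) (simp add: inner_vec_def power2_eq_square)
  have step: "H (doch_step J \<alpha> \<beta> y) \<le> H y - m/2 * (norm (doch_step J \<alpha> \<beta> y - y))^2" for y
  proof -
    define z where "z = doch_step J \<alpha> \<beta> y"
    define b where "b = A *v y"
    define d where "d = z - y"
    have zi: "\<beta> * (z$i)^3 = b$i" for i
    proof -
      have "(z$i)^3 = b$i / \<beta>" unfolding z_def b_def A_def doch_step_def
        by (simp add: odd_real_root_pow)
      then show ?thesis using beta_pos by simp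
    qed
    have f: "\<beta>/4 * (\<Sum>i\<in>UNIV. (z$i)^4) - \<beta>/4 * (\<Sum>i\<in>UNIV. (y$i)^4) \<le> b \<bullet> d"
    proof -
      have "\<beta>/4 * (\<Sum>i\<in>UNIV. (z$i)^4) - \<beta>/4 * (\<Sum>i\<in>UNIV. (y$i)^4)
            = (\<Sum>i\<in>UNIV. \<beta>/4 * ((z$i)^4 - (y$i)^4))"
        by (simp add: sum_distrib_left sum_subtractf right_diff_distrib)
      also have "\<dots> \<le> (\<Sum>i\<in>UNIV. \<beta>/4 * (4 * (z$i)^3 * (z$i - y$i)))"
        by (intro sum_mono mult_left_mono quart) (use beta_pos in auto)
      also have "\<dots> = (\<Sum>i\<in>UNIV. b$i * d$i)"
        by (intro sum.cong refl) (simp add: d_def flip: zi)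
      also have "\<dots> = b \<bullet> d" by (simp add: inner_vec_def)
      finally show ?thesis .
    qed
    have zd: "z = y + d" unfolding d_def by simp
    have g: "z \<bullet> (A *v z) = y \<bullet> (A *v y) + 2 * (b \<bullet> d) + d \<bullet> (A *v d)"
    proof -
      have "z \<bullet> (A *v z) = y \<bullet> (A *v y) + y \<bullet> (A *v d) + d \<bullet> (A *v y) + d \<bullet> (A *v d)"
        unfolding zd by (simp add: matrix_vector_right_distrib inner_add_left inner_add_right)
      moreover have "y \<bullet> (A *v d) = d \<bullet> (A *v y)" using symq[OF symA] by metis
      moreover have "d \<bullet> (A *v y) = b \<bullet> d" unfolding b_def by (simp add: inner_commute)
      ultimately show ?thesis by simp
    qed
    have "H z - H y \<le> - 1/2 * (d \<bullet> (A *v d))" unfolding H_def g using f by (simp add: algebra_simps)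
    also have "\<dots> \<le> - m/2 * (norm d)^2" using mq[of d] by simp
    finally show ?thesis unfolding z_def d_def by simp
  qed
  define c0 where "c0 = K^2 / (4*\<beta>)"
  define h where "h t = \<beta>/4 * t^4 - K/2 * t^2" for t :: real
  have hge: "h t + c0 \<ge> 0" for t unfolding h_def c0_def using hbound[OF beta_pos, where t=t and K=K] by simp
  have Hge: "(\<Sum>i\<in>UNIV. h (u$i)) \<le> H u" for u
  proof -
    have "u \<bullet> (A *v u) \<le> norm u * norm (A *v u)" by (rule order_trans[OF abs_ge_self Cauchy_Schwarz_ineq2])
    also have "\<dots> \<le> norm u * (norm u * K)" by (intro mult_left_mono Kb) simp
    finally have "u \<bullet> (A *v u) \<le> K * (\<Sum>i\<in>UNIV. (u$i)^2)" unfolding nsq[symmetric]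
      by (simp add: power2_eq_square algebra_simps)
    then show ?thesis unfolding H_def h_def
      by (simp add: sum_subtractf sum_distrib_left sum_divide_distrib[symmetric])
  qed
  define L where "L = - real CARD('n) * c0"
  have HL: "L \<le> H u" for u
  proof -
    have "(\<Sum>i\<in>(UNIV::'n set). h (u$i) + c0) \<ge> 0" by (intro sum_nonneg hge)
    then show ?thesis using Hge[of u] unfolding L_def by (simp add: sum.distrib)
  qed
  have mono: "H (x k) \<le> H (x 0)" for k
  proof (induction k)
    case (Suc k)
    have "m/2 * (norm (x (Suc k) - x k))^2 \<ge> 0" using mpos by simp
    then have "H (x (Suc k)) \<le> H (x k)" using step[of "x k"] iter by simp
    then show ?case using Suc by simp
  qed simp
  have bnd: "bounded (range x)"
  proof -
    define M where "M = H (x 0) + real CARD('n) * c0"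
    define B where "B = max 1 (4 * (\<bar>M\<bar> + K) / \<beta>)"
    have comp: "\<bar>x k $ j\<bar> \<le> B" for k j
    proof -
      have "h (x k $ j) + c0 \<le> (\<Sum>i\<in>UNIV. h (x k $ i) + c0)"
        by (rule member_le_sum[where f = "\<lambda>i. h (x k $ i) + c0"]) (use hge in auto)
      also have "\<dots> = (\<Sum>i\<in>UNIV. h (x k $ i)) + real CARD('n) * c0" by (simp add: sum.distrib)
      also have "\<dots> \<le> M" using Hge[of "x k"] mono[of k] unfolding M_def by simp
      finally have "h (x k $ j) \<le> M - c0" by simp
      moreover have "c0 \<ge> 0" unfolding c0_def using beta_pos by simp
      ultimately have "h (x k $ j) \<le> M" by simp
      then show ?thesis unfolding B_def h_def using tbound[OF beta_pos, of K] Kpos by simp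
    qed
    have "norm (x k) \<le> real CARD('n) * B" for k
    proof -
      have "norm (x k) \<le> (\<Sum>i\<in>UNIV. \<bar>x k $ i\<bar>)" by (rule norm_le_l1_cart)
      also have "\<dots> \<le> (\<Sum>i\<in>(UNIV::'n set). B)" by (intro sum_mono comp)
      finally show ?thesis by simp
    qed
    then show ?thesis unfolding bounded_iff by blast
  qed
  define D where "D k = (norm (x (Suc k) - x k))^2" for k
  have Dstep: "m/2 * D k \<le> H (x k) - H (x (Suc k))" for k
    using step[of "x k"] iter unfolding D_def by simp
  have partial: "(\<Sum>k<N. D k) \<le> 2 * (H (x 0) - L) / m" for N
  proof -
    have "(\<Sum>k<N. m/2 * D k) \<le> (\<Sum>k<N. H (x k) - H (x (Suc k)))" by (intro sum_mono Dstep)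
    also have "\<dots> = H (x 0) - H (x N)" by (induction N) auto
    also have "\<dots> \<le> H (x 0) - L" using HL[of "x N"] by simp
    finally have "m/2 * (\<Sum>k<N. D k) \<le> H (x 0) - L" by (simp add: sum_distrib_left)
    then show ?thesis using mpos by (simp add: field_simps)
  qed
  have "summable D" by (rule summableI_nonneg_bounded[OF _ partial]) (simp add: D_def)
  then have "D \<longlonglongrightarrow> 0" by (rule summable_LIMSEQ_zero)
  then have "(\<lambda>k. sqrt (D k)) \<longlonglongrightarrow> sqrt 0" by (rule tendsto_real_sqrt)
  then have "(\<lambda>k. norm (x (Suc k) - x k)) \<longlonglongrightarrow> 0" unfolding D_def by simp
  with bnd show ?thesis by simp
qed

end
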